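(* If $P$ and $Q$ are partition polynomials, then the composition $P\circ Q$ is also a partition polynomial.
   Context: A polynomial $P(X)$ with integer coefficients is called a partition polynomial if it can be written in the form \[P(X)=a_nX^n + a_{n-1}X^{n-1}(1-X) + \cdots + a_0(1-X)^n\] for some integer $n\ge 0$ and some integers $a_0,\dots,a_n$ with $0\le a_i\le \binom{n}{i}$ for all $i\le n$. *)

theory Defs
  imports "HOL-Computational_Algebra.Polynomial"
begin

definition partition_poly :: "int poly \<Rightarrow> bool" where
  "partition_poly P \<longleftrightarrow> (\<exists>(n::nat) (a::nat \<Rightarrow> int).
     (\<forall>i\<le>n. 0 \<le> a i \<and> a i \<le> int (n choose i)) \<and>
     P = (\<Sum>i\<le>n. smult (a i) ([:0, 1:] ^ i * [:1, -1:] ^ (n - i))))"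

end

theory Submission
  imports Defs
begin

definition bern :: "nat \<Rightarrow> (nat \<Rightarrow> int) \<Rightarrow> int poly" where
  "bern N c = (\<Sum>i\<le>N. smult (c i) ([:0, 1:] ^ i * [:1, -1:] ^ (N - i)))"

definition NB :: "nat \<Rightarrow> int poly \<Rightarrow> bool" where
  "NB N P \<longleftrightarrow> (\<exists>c. (\<forall>k\<le>N. 0 \<le> c k) \<and> P = bern N c)"

lemma bern_add: "bern N (\<lambda>k. c k + d k) = bern N c + bern N d"
  by (simp add: bern_def smult_add_left sum.distrib)

lemma bern_diff: "bern N (\<lambda>k. c k - d k) = bern N c - bern N d"
  by (simp add: bern_def smult_diff_left sum_subtractf)

lemma smult_sum_right: "smult r (\<Sum>i\<in>A. f i) = (\<Sum>i\<in>A. smult r (f i))"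
  by (induction A rule: infinite_finite_induct) (auto simp: smult_add_right)

lemma bern_smult: "bern N (\<lambda>k. r * c k) = smult r (bern N c)"
  by (simp add: bern_def smult_sum_right)

lemma bern_sum: "bern N (\<lambda>k. \<Sum>i\<in>A. f i k) = (\<Sum>i\<in>A. bern N (f i))"
  unfolding bern_def smult_sum by (rule sum.swap)

lemma binom_one:
  fixes A B :: "int poly"
  assumes "A + B = 1"
  shows "(\<Sum>k\<le>N. smult (int (N choose k)) (A ^ k * B ^ (N - k))) = 1"
proof -
  have "(A + B) ^ N = (\<Sum>k\<le>N. of_nat (N choose k) * A ^ k * B ^ (N - k))"
    by (rule binomial_ring)
  also have "\<dots> = (\<Sum>k\<le>N. smult (int (N choose k)) (A ^ k * B ^ (N - k)))"
    by (simp add: of_nat_poly mult.assoc)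
  finally show ?thesis using assms by simp
qed

lemma NB_zero: "NB N 0"
  unfolding NB_def by (rule exI[of _ "\<lambda>_. 0"]) (simp add: bern_def)

lemma NB_add: "NB N P \<Longrightarrow> NB N Q \<Longrightarrow> NB N (P + Q)"
  unfolding NB_def
proof (elim exE conjE)
  fix c d assume "\<forall>k\<le>N. 0 \<le> c k" "P = bern N c" "\<forall>k\<le>N. 0 \<le> d k" "Q = bern N d"
  then show "\<exists>e. (\<forall>k\<le>N. 0 \<le> e k) \<and> P + Q = bern N e"
    by (intro exI[of _ "\<lambda>k. c k + d k"]) (simp add: bern_add)
qed

lemma NB_smult: "NB N P \<Longrightarrow> 0 \<le> r \<Longrightarrow> NB N (smult r P)"
  unfolding NB_def
proof (elim exE conjE)
  fix c assume "\<forall>k\<le>N. 0 \<le> c k" "P = bern N c" "0 \<le> r"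
  then show "\<exists>e. (\<forall>k\<le>N. 0 \<le> e k) \<and> smult r P = bern N e"
    by (intro exI[of _ "\<lambda>k. r * c k"]) (simp add: bern_smult)
qed

lemma NB_sum: "(\<And>i. i \<in> A \<Longrightarrow> NB N (f i)) \<Longrightarrow> NB N (\<Sum>i\<in>A. f i)"
  by (induction A rule: infinite_finite_induct) (auto simp: NB_zero NB_add)

lemma smult_if01: "smult (if b then 1 else 0) (p::int poly) = (if b then p else 0)"
  by simp

lemma NB_mono: "k \<le> N \<Longrightarrow> NB N ([:0, 1:] ^ k * [:1, -1:] ^ (N - k))"
  unfolding NB_def
  by (intro exI[of _ "\<lambda>i. if i = k then 1 else 0"]) (simp add: bern_def smult_if01)

lemma NB_mult:
  assumes "NB n P" "NB m Q"
  shows "NB (n + m) (P * Q)"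
proof -
  obtain c d where c: "\<forall>k\<le>n. 0 \<le> c k" "P = bern n c" and d: "\<forall>k\<le>m. 0 \<le> d k" "Q = bern m d"
    using assms unfolding NB_def by blast
  have "P * Q = (\<Sum>i\<le>n. \<Sum>j\<le>m. smult (c i) ([:0, 1:] ^ i * [:1, -1:] ^ (n - i)) *
      smult (d j) ([:0, 1:] ^ j * [:1, -1:] ^ (m - j)))"
    unfolding c d bern_def by (rule sum_product)
  also have "\<dots> = (\<Sum>i\<le>n. \<Sum>j\<le>m. smult (c i * d j) ([:0, 1:] ^ (i + j) * [:1, -1:] ^ (n + m - (i + j))))"
  proof (intro sum.cong refl)
    fix i j assume "i \<in> {..n}" "j \<in> {..m}"
    then have "n + m - (i + j) = (n - i) + (m - j)" by auto
    then show "smult (c i) ([:0, 1:] ^ i * [:1, -1:] ^ (n - i)) *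
      smult (d j) ([:0, 1:] ^ j * [:1, -1:] ^ (m - j)) =
      smult (c i * d j) ([:0, 1:] ^ (i + j) * [:1, -1:] ^ (n + m - (i + j)))"
      by (simp add: power_add algebra_simps)
  qed
  finally have eq: "P * Q = \<dots>" .
  show ?thesis unfolding eq
    using c d by (intro NB_sum NB_smult NB_mono) auto
qed

lemma NB_one: "NB 0 1"
  unfolding NB_def by (intro exI[of _ "\<lambda>_. 1"]) (simp add: bern_def)

lemma NB_power: "NB m Q \<Longrightarrow> NB (j * m) (Q ^ j)"
proof (induction j)
  case 0 then show ?case by (simp add: NB_one)
next
  case (Suc j)
  then have "NB (m + j * m) (Q * Q ^ j)" by (intro NB_mult) auto
  then show ?case by simp
qed

lemma bern_Suc: "bern (Suc N) c = smult (c 0) ([:1, -1:] ^ Suc N) + [:0, 1:] * bern N (\<lambda>k. c (Suc k))"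
  unfolding bern_def sum.atMost_Suc_shift
  by (simp add: sum_distrib_left algebra_simps)

lemma bern_zero: "bern N c = 0 \<Longrightarrow> k \<le> N \<Longrightarrow> c k = 0"
proof (induction N arbitrary: c k)
  case 0 then show ?case by (simp add: bern_def)
next
  case (Suc N)
  have "poly (bern (Suc N) c) 0 = c 0" by (simp add: bern_Suc)
  then have c0: "c 0 = 0" using Suc.prems by simp
  then have "[:0, 1:] * bern N (\<lambda>k. c (Suc k)) = 0" using Suc.prems by (simp add: bern_Suc)
  then have z: "bern N (\<lambda>k. c (Suc k)) = 0" by simp
  show ?case
  proof (cases k)
    case 0 then show ?thesis using c0 by simp
  next
    case (Suc k') then show ?thesis using Suc.IH[OF z, of k'] Suc.prems by simp
  qed
qed

lemma bern_binom: "bern N (\<lambda>k. int (N choose k)) = 1"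
  unfolding bern_def by (rule binom_one) simp

lemma pcompose_power: "pcompose (p ^ k) q = (pcompose p q) ^ k"
  by (induction k) (simp_all add: pcompose_1 pcompose_mult)

theorem mainTheorem3:
  fixes P Q :: "int poly"
  assumes "partition_poly P" and "partition_poly Q"
  shows "partition_poly (pcompose P Q)"
proof -
  obtain n a where a: "\<forall>i\<le>n. 0 \<le> a i \<and> a i \<le> int (n choose i)" and P: "P = bern n a"
    using assms(1) unfolding partition_poly_def bern_def by blast
  obtain m b where b: "\<forall>i\<le>m. 0 \<le> b i \<and> b i \<le> int (m choose i)" and Q: "Q = bern m b"
    using assms(2) unfolding partition_poly_def bern_def by blast
  have NBQ: "NB m Q" unfolding NB_def Q using b by blast
  have "1 - Q = bern m (\<lambda>k. int (m choose k) - b k)"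
    by (simp add: bern_diff bern_binom Q)
  then have NBQ': "NB m (1 - Q)" unfolding NB_def using b by (intro exI[of _ "\<lambda>k. int (m choose k) - b k"]) auto
  define T where "T i = Q ^ i * (1 - Q) ^ (n - i)" for i
  have "NB (n * m) (T i)" if "i \<le> n" for i
  proof -
    have "NB (i * m + (n - i) * m) (T i)" unfolding T_def
      by (intro NB_mult NB_power NBQ NBQ')
    moreover have "i * m + (n - i) * m = n * m" using that by (simp add: add_mult_distrib[symmetric])
    ultimately show ?thesis by simp
  qed
  then have "\<forall>i\<in>{..n}. \<exists>c. (\<forall>k\<le>n * m. 0 \<le> c k) \<and> T i = bern (n * m) c"
    unfolding NB_def by auto
  then obtain C where C: "\<And>i. i \<in> {..n} \<Longrightarrow> (\<forall>k\<le>n * m. 0 \<le> C i k) \<and> T i = bern (n * m) (C i)"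
    by metis
  have "1 = (\<Sum>i\<le>n. smult (int (n choose i)) (T i))"
    unfolding T_def by (rule binom_one[symmetric]) simp
  also have "\<dots> = (\<Sum>i\<le>n. smult (int (n choose i)) (bern (n * m) (C i)))"
    using C by (intro sum.cong) auto
  also have "\<dots> = bern (n * m) (\<lambda>k. \<Sum>i\<le>n. int (n choose i) * C i k)"
    by (simp add: bern_sum bern_smult)
  finally have "bern (n * m) (\<lambda>k. int (n * m choose k)) - bern (n * m) (\<lambda>k. \<Sum>i\<le>n. int (n choose i) * C i k) = 0"
    by (simp add: bern_binom)
  then have "bern (n * m) (\<lambda>k. int (n * m choose k) - (\<Sum>i\<le>n. int (n choose i) * C i k)) = 0"
    by (simp add: bern_diff)
  then have sumC: "(\<Sum>i\<le>n. int (n choose i) * C i k) = int (n * m choose k)" if "k \<le> n * m" for k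
    using bern_zero that by fastforce
  have pcT: "pcompose ([:0, 1:] ^ i * [:1, -1:] ^ (n - i)) Q = T i" for i
  proof -
    have e1: "pcompose [:0, 1:] Q = Q" by (simp add: pcompose_pCons)
    have "pcompose [:1, -1:] Q = [:1:] - Q" by (simp add: pcompose_pCons)
    then have e2: "pcompose [:1, -1:] Q = 1 - Q" by (metis one_pCons)
    show ?thesis by (simp only: T_def pcompose_mult pcompose_power e1 e2)
  qed
  have "pcompose P Q = (\<Sum>i\<le>n. smult (a i) (T i))"
    unfolding P bern_def by (simp add: pcompose_sum pcompose_smult pcT)
  also have "\<dots> = (\<Sum>i\<le>n. smult (a i) (bern (n * m) (C i)))"
    using C by (intro sum.cong) auto
  also have "\<dots> = bern (n * m) (\<lambda>k. \<Sum>i\<le>n. a i * C i k)"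
    by (simp add: bern_sum bern_smult)
  finally have eq: "pcompose P Q = \<dots>" .
  have bnd: "0 \<le> (\<Sum>i\<le>n. a i * C i k) \<and> (\<Sum>i\<le>n. a i * C i k) \<le> int (n * m choose k)"
    if "k \<le> n * m" for k
  proof
    show "0 \<le> (\<Sum>i\<le>n. a i * C i k)" using a C that by (intro sum_nonneg) auto
    have "(\<Sum>i\<le>n. a i * C i k) \<le> (\<Sum>i\<le>n. int (n choose i) * C i k)"
      using a C that by (intro sum_mono mult_right_mono) auto
    then show "(\<Sum>i\<le>n. a i * C i k) \<le> int (n * m choose k)" using sumC that by simp
  qed
  show ?thesis unfolding partition_poly_def
  proof (intro exI[of _ "n * m"] exI[of _ "\<lambda>k. \<Sum>i\<le>n. a i * C i k"] conjI allI impI)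
    show "pcompose P Q = (\<Sum>i\<le>n * m. smult (\<Sum>j\<le>n. a j * C j i) ([:0, 1:] ^ i * [:1, - 1:] ^ (n * m - i)))"
      using eq unfolding bern_def .
  qed (use bnd in auto)
qed

end
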